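(* Let $\leq$ be an admissible bi-invariant total order on a group $G$. Then $\leq$ is a quasi-total order, and for every dominant $g\in G^{++}$ the growth function $\gamma_g:G\to\mathbb{R}$ is a group homomorphism.
   Context: A partial order $\leq$ on a group $G$ is bi-invariant if $g\leq h$ implies $gk\leq hk$ and $kg\leq kh$ for all $g,h,k$. $G^+=\{g: g\geq e\}$; the dominants are $G^{++}=\{g\in G^+\setminus\{e\}: \forall h\in G\ \exists n\in\mathbb{N}_0,\ g^n\geq h\}$; admissible means $G^{++}\neq\emptyset$. For $g\in G^{++}$, $\gamma_g(h)=\lim_{n\to\infty}\frac1n\inf\{p\in\mathbb{Z}: g^p\geq h^n\}$. A half-space filtration of a set $X$ is a family $\{H_n\}_{n\in\mathbb{Z}}$ of subsets with $H_{n+1}\subsetneq H_n$, $\bigcap H_n=\emptyset$, $\bigcup H_n=X$; the height is $h(a)=\sup\{n: a\in H_n\}$ and $h(a,b)=h(a)-h(b)$. $(X,\preceq,\{H_n\})$ is a half-space order if $(X,\preceq)$ is a poset, $\{H_n\}$ a half-space filtration, and for some constant $w$, $h(a,b)\geq w\Rightarrow a\succeq b$. A $G$-action on $X$ is by quasi-automorphisms if for some $d$, $|h(ga,gb)-h(a,b)|\leq d$ for all $g,a,b$; unbounded if some $g\in G,a\in X$ satisfy $h(g^na)\to\pm\infty$ as $n\to\pm\infty$. For an effective action, the induced order on $G$ is $g\leq h\Leftrightarrow\forall k\in G\,\forall x\in X:(kg).x\preceq(kh).x$. A quasi-total order on $G$ is an order induced from an effective, unbounded action by quasi-automorphisms on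 some half-space order. *)

theory Defs
  imports "HOL-Analysis.Analysis" "HOL-Algebra.Group_Action"
begin

definition partial_order_rel :: "'x set \<Rightarrow> ('x \<Rightarrow> 'x \<Rightarrow> bool) \<Rightarrow> bool" where
  "partial_order_rel X r \<longleftrightarrow>
     (\<forall>a\<in>X. r a a) \<and>
     (\<forall>a\<in>X. \<forall>b\<in>X. r a b \<and> r b a \<longrightarrow> a = b) \<and>
     (\<forall>a\<in>X. \<forall>b\<in>X. \<forall>c\<in>X. r a b \<and> r b c \<longrightarrow> r a c)"

definition bi_invariant_order :: "('a, 'b) monoid_scheme \<Rightarrow> ('a \<Rightarrow> 'a \<Rightarrow> bool) \<Rightarrow> bool" where
  "bi_invariant_order G leq \<longleftrightarrow>
     partial_order_rel (carrier G) leq \<and>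
     (\<forall>g\<in>carrier G. \<forall>h\<in>carrier G. \<forall>k\<in>carrier G.
        leq g h \<longrightarrow> leq (g \<otimes>\<^bsub>G\<^esub> k) (h \<otimes>\<^bsub>G\<^esub> k) \<and> leq (k \<otimes>\<^bsub>G\<^esub> g) (k \<otimes>\<^bsub>G\<^esub> h))"

definition total_rel :: "'x set \<Rightarrow> ('x \<Rightarrow> 'x \<Rightarrow> bool) \<Rightarrow> bool" where
  "total_rel X r \<longleftrightarrow> (\<forall>a\<in>X. \<forall>b\<in>X. r a b \<or> r b a)"

definition dominants :: "('a, 'b) monoid_scheme \<Rightarrow> ('a \<Rightarrow> 'a \<Rightarrow> bool) \<Rightarrow> 'a set" where
  "dominants G leq = {g \<in> carrier G. leq \<one>\<^bsub>G\<^esub> g \<and> g \<noteq> \<one>\<^bsub>G\<^esub> \<and>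
       (\<forall>h\<in>carrier G. \<exists>n::nat. leq h (g [^]\<^bsub>G\<^esub> n))}"

definition admissible :: "('a, 'b) monoid_scheme \<Rightarrow> ('a \<Rightarrow> 'a \<Rightarrow> bool) \<Rightarrow> bool" where
  "admissible G leq \<longleftrightarrow> dominants G leq \<noteq> {}"

definition growth_seq :: "('a, 'b) monoid_scheme \<Rightarrow> ('a \<Rightarrow> 'a \<Rightarrow> bool) \<Rightarrow> 'a \<Rightarrow> 'a \<Rightarrow> nat \<Rightarrow> real" where
  "growth_seq G leq g h n =
     real_of_int (Inf {p::int. leq (h [^]\<^bsub>G\<^esub> n) (g [^]\<^bsub>G\<^esub> p)}) / real n"

definition growth :: "('a, 'b) monoid_scheme \<Rightarrow> ('a \<Rightarrow> 'a \<Rightarrow> bool) \<Rightarrow> 'a \<Rightarrow> 'a \<Rightarrow> real" where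
  "growth G leq g h = lim (growth_seq G leq g h)"

definition half_space_filtration :: "'x set \<Rightarrow> (int \<Rightarrow> 'x set) \<Rightarrow> bool" where
  "half_space_filtration X H \<longleftrightarrow>
     (\<forall>n. H (n + 1) \<subset> H n) \<and> (\<Inter>n. H n) = {} \<and> (\<Union>n. H n) = X"

definition height :: "(int \<Rightarrow> 'x set) \<Rightarrow> 'x \<Rightarrow> int" where
  "height H a = Sup {n. a \<in> H n}"

definition height2 :: "(int \<Rightarrow> 'x set) \<Rightarrow> 'x \<Rightarrow> 'x \<Rightarrow> int" where
  "height2 H a b = height H a - height H b"

definition half_space_order :: "'x set \<Rightarrow> ('x \<Rightarrow> 'x \<Rightarrow> bool) \<Rightarrow> (int \<Rightarrow> 'x set) \<Rightarrow> bool" where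
  "half_space_order X pr H \<longleftrightarrow>
     partial_order_rel X pr \<and> half_space_filtration X H \<and>
     (\<exists>w::int. \<forall>a\<in>X. \<forall>b\<in>X. height2 H a b \<ge> w \<longrightarrow> pr b a)"

definition quasi_aut_action ::
    "('a, 'b) monoid_scheme \<Rightarrow> 'x set \<Rightarrow> (int \<Rightarrow> 'x set) \<Rightarrow> ('a \<Rightarrow> 'x \<Rightarrow> 'x) \<Rightarrow> bool" where
  "quasi_aut_action G X H \<phi> \<longleftrightarrow> group_action G X \<phi> \<and>
     (\<exists>d::int. \<forall>g\<in>carrier G. \<forall>a\<in>X. \<forall>b\<in>X.
        \<bar>height2 H (\<phi> g a) (\<phi> g b) - height2 H a b\<bar> \<le> d)"

definition effective_action :: "('a, 'b) monoid_scheme \<Rightarrow> 'x set \<Rightarrow> ('a \<Rightarrow> 'x \<Rightarrow> 'x) \<Rightarrow> bool" where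
  "effective_action G X \<phi> \<longleftrightarrow>
     (\<forall>g\<in>carrier G. (\<forall>x\<in>X. \<phi> g x = x) \<longrightarrow> g = \<one>\<^bsub>G\<^esub>)"

definition unbounded_action ::
    "('a, 'b) monoid_scheme \<Rightarrow> 'x set \<Rightarrow> (int \<Rightarrow> 'x set) \<Rightarrow> ('a \<Rightarrow> 'x \<Rightarrow> 'x) \<Rightarrow> bool" where
  "unbounded_action G X H \<phi> \<longleftrightarrow>
     (\<exists>g\<in>carrier G. \<exists>a\<in>X.
        filterlim (\<lambda>n::int. height H (\<phi> (g [^]\<^bsub>G\<^esub> n) a)) at_top at_top \<and>
        filterlim (\<lambda>n::int. height H (\<phi> (g [^]\<^bsub>G\<^esub> n) a)) at_bot at_bot)"

definition induced_order ::
    "('a, 'b) monoid_scheme \<Rightarrow> 'x set \<Rightarrow> ('x \<Rightarrow> 'x \<Rightarrow> bool) \<Rightarrow> ('a \<Rightarrow> 'x \<Rightarrow> 'x) \<Rightarrow> 'a \<Rightarrow> 'a \<Rightarrow> bool" where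
  "induced_order G X pr \<phi> g h \<longleftrightarrow>
     (\<forall>k\<in>carrier G. \<forall>x\<in>X. pr (\<phi> (k \<otimes>\<^bsub>G\<^esub> g) x) (\<phi> (k \<otimes>\<^bsub>G\<^esub> h) x))"

text \<open>Quasi-total order; the space X is taken to be a set of elements of the
  same type as the group elements.\<close>
definition quasi_total_order :: "('a, 'b) monoid_scheme \<Rightarrow> ('a \<Rightarrow> 'a \<Rightarrow> bool) \<Rightarrow> bool" where
  "quasi_total_order G leq \<longleftrightarrow>
     (\<exists>(X::'a set) pr H \<phi>. half_space_order X pr H \<and> quasi_aut_action G X H \<phi> \<and>
        effective_action G X \<phi> \<and> unbounded_action G X H \<phi> \<and>
        (\<forall>g\<in>carrier G. \<forall>h\<in>carrier G. leq g h \<longleftrightarrow> induced_order G X pr \<phi> g h))"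

end

theory Submission
  imports Defs
begin

locale bo = group G for G (structure) +
  fixes leq :: "'a \<Rightarrow> 'a \<Rightarrow> bool"
  assumes bi: "bi_invariant_order G leq" and tot: "total_rel (carrier G) leq"
begin

lemma refl: "a \<in> carrier G \<Longrightarrow> leq a a"
  using bi unfolding bi_invariant_order_def partial_order_rel_def by blast
lemma antisym: "a \<in> carrier G \<Longrightarrow> b \<in> carrier G \<Longrightarrow> leq a b \<Longrightarrow> leq b a \<Longrightarrow> a = b"
  using bi unfolding bi_invariant_order_def partial_order_rel_def by blast
lemma trans: "a \<in> carrier G \<Longrightarrow> b \<in> carrier G \<Longrightarrow> c \<in> carrier G \<Longrightarrow> leq a b \<Longrightarrow> leq b c \<Longrightarrow> leq a c"
  using bi unfolding bi_invariant_order_def partial_order_rel_def by blast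
lemma mr: "a \<in> carrier G \<Longrightarrow> b \<in> carrier G \<Longrightarrow> k \<in> carrier G \<Longrightarrow> leq a b \<Longrightarrow> leq (a \<otimes> k) (b \<otimes> k)"
  using bi unfolding bi_invariant_order_def by blast
lemma ml: "a \<in> carrier G \<Longrightarrow> b \<in> carrier G \<Longrightarrow> k \<in> carrier G \<Longrightarrow> leq a b \<Longrightarrow> leq (k \<otimes> a) (k \<otimes> b)"
  using bi unfolding bi_invariant_order_def by blast
lemma total: "a \<in> carrier G \<Longrightarrow> b \<in> carrier G \<Longrightarrow> leq a b \<or> leq b a"
  using tot unfolding total_rel_def by blast

lemma inv_mono: assumes "a \<in> carrier G" "b \<in> carrier G" "leq a b" shows "leq (inv b) (inv a)"
proof -
  have "leq (inv b \<otimes> a \<otimes> inv a) (inv b \<otimes> b \<otimes> inv a)"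
    using assms by (intro mr ml) auto
  thus ?thesis using assms by (simp add: m_assoc)
qed

lemma mult_mono2: assumes "a \<in> carrier G" "b \<in> carrier G" "x \<in> carrier G" "y \<in> carrier G"
  "leq a x" "leq b y" shows "leq (a \<otimes> b) (x \<otimes> y)"
  using assms by (meson m_closed mr ml trans)

lemma mult_strict: assumes "a \<in> carrier G" "b \<in> carrier G" "x \<in> carrier G" "y \<in> carrier G"
  "leq a x" "a \<noteq> x" "leq b y" shows "leq (a \<otimes> b) (x \<otimes> y) \<and> a \<otimes> b \<noteq> x \<otimes> y"
proof
  show "leq (a \<otimes> b) (x \<otimes> y)" using mult_mono2 assms by blast
  show "a \<otimes> b \<noteq> x \<otimes> y"
  proof
    assume e: "a \<otimes> b = x \<otimes> y"
    have "leq (x \<otimes> b) (x \<otimes> y)" using assms ml by blast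
    hence "leq (x \<otimes> b) (a \<otimes> b)" using e by simp
    moreover have "leq (a \<otimes> b) (x \<otimes> b)" using assms mr by blast
    ultimately have "a \<otimes> b = x \<otimes> b" using antisym assms by simp
    thus False using assms by simp
  qed
qed

lemma swap1: assumes "a \<in> carrier G" "b \<in> carrier G" "leq (a \<otimes> b) (b \<otimes> a)"
  shows "leq (a \<otimes> b [^] (n::nat)) (b [^] n \<otimes> a)"
proof (induction n)
  case 0 thus ?case using assms refl by simp
next
  case (Suc n)
  have A: "leq (a \<otimes> b [^] Suc n) (b [^] n \<otimes> (a \<otimes> b))"
    using mr[OF _ _ _ Suc, of b] assms by (simp add: m_assoc)
  have B: "leq (b [^] n \<otimes> (a \<otimes> b)) (b [^] Suc n \<otimes> a)"
    using ml[OF _ _ _ assms(3), of "b [^] n"] assms by (simp add: m_assoc)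
  show ?case using trans[OF _ _ _ A B] assms by simp
qed

lemma swap2: assumes "a \<in> carrier G" "b \<in> carrier G" "leq (a \<otimes> b) (b \<otimes> a)"
  shows "leq (a [^] (n::nat) \<otimes> b) (b \<otimes> a [^] n)"
proof (induction n)
  case 0 thus ?case using assms refl by simp
next
  case (Suc n)
  have A: "leq (a [^] Suc n \<otimes> b) (a [^] n \<otimes> b \<otimes> a)"
    using ml[OF _ _ _ assms(3), of "a [^] n"] assms by (simp add: m_assoc)
  have B: "leq (a [^] n \<otimes> b \<otimes> a) (b \<otimes> a [^] Suc n)"
    using mr[OF _ _ _ Suc, of a] assms by (simp add: m_assoc)
  show ?case using trans[OF _ _ _ A B] assms by simp
qed

lemma swap_lower: assumes "a \<in> carrier G" "b \<in> carrier G" "leq (a \<otimes> b) (b \<otimes> a)"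
  shows "leq (a [^] (n::nat) \<otimes> b [^] n) ((a \<otimes> b) [^] n)"
proof (induction n)
  case 0 thus ?case using assms refl by simp
next
  case (Suc n)
  have A: "leq (a [^] Suc n \<otimes> b [^] Suc n) ((a [^] n \<otimes> b [^] n) \<otimes> (a \<otimes> b))"
    using mr[OF _ _ _ ml[OF _ _ _ swap1[OF assms, of n], of "a [^] n"], of b] assms by (simp add: m_assoc)
  have B: "leq ((a [^] n \<otimes> b [^] n) \<otimes> (a \<otimes> b)) ((a \<otimes> b) [^] Suc n)"
    using mr[OF _ _ _ Suc, of "a \<otimes> b"] assms by simp
  show ?case using trans[OF _ _ _ A B] assms by simp
qed

lemma swap_upper: assumes "a \<in> carrier G" "b \<in> carrier G" "leq (a \<otimes> b) (b \<otimes> a)"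
  shows "leq ((a \<otimes> b) [^] (n::nat)) (b [^] n \<otimes> a [^] n)"
proof (induction n)
  case 0 thus ?case using assms refl by simp
next
  case (Suc n)
  have A: "leq ((a \<otimes> b) [^] Suc n) (b [^] n \<otimes> (a [^] Suc n \<otimes> b))"
    using mr[OF _ _ _ Suc, of "a \<otimes> b"] assms by (simp add: m_assoc)
  have B: "leq (b [^] n \<otimes> (a [^] Suc n \<otimes> b)) (b [^] Suc n \<otimes> a [^] Suc n)"
    using ml[OF _ _ _ swap2[OF assms, of "Suc n"], of "b [^] n"] assms by (simp add: m_assoc)
  show ?case using trans[OF _ _ _ A B] assms by simp
qed

end

lemma (in bo) bo_flip: "bo G (\<lambda>a b. leq b a)"
proof -
  have po: "partial_order_rel (carrier G) (\<lambda>a b. leq b a)"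
    unfolding partial_order_rel_def
  proof (intro conjI ballI impI)
    fix a assume "a \<in> carrier G" thus "leq a a" by (rule refl)
  next
    fix a b assume "a \<in> carrier G" "b \<in> carrier G" "leq b a \<and> leq a b"
    thus "a = b" using antisym[of a b] by blast
  next
    fix a b c assume "a \<in> carrier G" "b \<in> carrier G" "c \<in> carrier G" "leq b a \<and> leq c b"
    thus "leq c a" using trans[of c b a] by blast
  qed
  have bi': "bi_invariant_order G (\<lambda>a b. leq b a)"
    unfolding bi_invariant_order_def
  proof (intro conjI po ballI impI)
    fix x y k assume "x \<in> carrier G" "y \<in> carrier G" "k \<in> carrier G" "leq y x"
    thus "leq (y \<otimes> k) (x \<otimes> k)" "leq (k \<otimes> y) (k \<otimes> x)" using mr[of y x k] ml[of y x k] by auto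
  qed
  have "total_rel (carrier G) (\<lambda>a b. leq b a)" unfolding total_rel_def using total by blast
  thus ?thesis using bi' is_group unfolding bo_def bo_axioms_def by simp
qed

locale bod = bo +
  fixes g assumes gd: "g \<in> dominants G leq"
begin

lemma g_carr[simp]: "g \<in> carrier G" and g_pos: "leq \<one> g" and g_ne: "g \<noteq> \<one>"
  and g_dom: "h \<in> carrier G \<Longrightarrow> \<exists>n::nat. leq h (g [^] n)"
  using gd unfolding dominants_def by auto

lemma pow_nat_pos: "leq \<one> (g [^] (k::nat))"
proof (induction k)
  case 0 thus ?case using refl by simp
next
  case (Suc k)
  have "leq (g [^] k \<otimes> \<one>) (g [^] k \<otimes> g)" using g_pos by (intro ml) auto
  hence "leq (g [^] k) (g [^] Suc k)" by simp
  thus ?case using trans[OF _ _ _ Suc] by simp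
qed

lemma pow_nat_ge_g: "k \<ge> 1 \<Longrightarrow> leq g (g [^] (k::nat))"
proof -
  assume "k \<ge> 1"
  then obtain j where k: "k = Suc j" by (cases k) auto
  have "leq (\<one> \<otimes> g) (g [^] j \<otimes> g)" using pow_nat_pos by (intro mr) auto
  thus ?thesis using k by simp
qed

lemma pow_mono: assumes "p \<le> (q::int)" shows "leq (g [^] p) (g [^] q)"
proof -
  define k where "k = nat (q - p)"
  have k: "q = p + int k" using assms k_def by simp
  have "leq (g [^] p \<otimes> \<one>) (g [^] p \<otimes> g [^] k)" using pow_nat_pos by (intro ml) auto
  thus ?thesis using k by (simp add: int_pow_mult int_pow_int)
qed

lemma pow_le_iff: "leq (g [^] p) (g [^] q) \<longleftrightarrow> p \<le> (q::int)"
proof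
  assume le: "leq (g [^] p) (g [^] q)"
  show "p \<le> q"
  proof (rule ccontr)
    assume "\<not> p \<le> q"
    then have k: "p = q + int (nat (p - q))" "nat (p - q) \<ge> 1" by auto
    define k where "k = nat (p - q)"
    note k = k[folded k_def]
    have "leq (g [^] q \<otimes> g) (g [^] q \<otimes> g [^] k)" using pow_nat_ge_g[OF k(2)] by (intro ml) auto
    hence a: "leq (g [^] q \<otimes> g) (g [^] p)" using k by (simp add: int_pow_mult int_pow_int)
    have "leq (g [^] q \<otimes> \<one>) (g [^] q \<otimes> g)" using g_pos by (intro ml) auto
    hence b: "leq (g [^] q) (g [^] q \<otimes> g)" by simp
    have c: "leq (g [^] q \<otimes> g) (g [^] q)" using trans[OF _ _ _ a le] by simp
    have "g [^] q \<otimes> g = g [^] q" using antisym[OF _ _ c b] by simp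
    hence "g = \<one>" using l_cancel_one[of "g [^] q" g] by simp
    thus False using g_ne by simp
  qed
next
  assume "p \<le> q" thus "leq (g [^] p) (g [^] q)" by (rule pow_mono)
qed

definition T :: "'a \<Rightarrow> int" where "T h = Inf {p::int. leq h (g [^] p)}"

lemma T_char: assumes h: "h \<in> carrier G" shows "leq h (g [^] p) \<longleftrightarrow> T h \<le> p"
proof -
  let ?S = "{p::int. leq h (g [^] p)}"
  obtain m::nat where m: "leq (inv h) (g [^] m)" using g_dom h by blast
  have lb: "p \<in> ?S \<Longrightarrow> - int m \<le> p" for p
  proof -
    assume "p \<in> ?S"
    have "leq (inv (g [^] m)) (inv (inv h))" using inv_mono[OF _ _ m] h by auto
    hence "leq (g [^] (- int m)) h" using h by (simp add: int_pow_neg_int)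
    moreover have "leq h (g [^] p)" using \<open>p \<in> ?S\<close> by simp
    ultimately have "leq (g [^] (- int m)) (g [^] p)" using trans[OF _ h] by simp
    thus ?thesis using pow_le_iff by simp
  qed
  obtain n::nat where n: "leq h (g [^] n)" using g_dom h by blast
  define L where "L = - int m"
  have ex: "\<exists>k::nat. L + int k \<in> ?S"
  proof -
    have "L + int (m + n) = int n" unfolding L_def by simp
    thus ?thesis using n by (intro exI[of _ "m + n"]) (simp add: int_pow_int L_def)
  qed
  define k where "k = (LEAST k::nat. L + int k \<in> ?S)"
  have kS: "L + int k \<in> ?S" unfolding k_def using ex by (metis LeastI_ex)
  have up: "q \<in> ?S \<longleftrightarrow> L + int k \<le> q" for q
  proof
    assume le: "L + int k \<le> q"
    have k1: "leq h (g [^] (L + int k))" using kS by simp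
    have k2: "leq (g [^] (L + int k)) (g [^] q)" using pow_mono[OF le] .
    show "q \<in> ?S" using trans[OF h _ _ k1 k2] by simp
  next
    assume qS: "q \<in> ?S"
    show "L + int k \<le> q"
    proof (rule ccontr)
      assume "\<not> L + int k \<le> q"
      moreover have "L \<le> q" using lb qS L_def by auto
      ultimately have j: "q = L + int (nat (q - L))" "nat (q - L) < k" by auto
      define j where "j = nat (q - L)"
      note j = j[folded j_def]
      hence "L + int j \<in> ?S" using qS by simp
      hence "k \<le> j" unfolding k_def by (rule Least_le)
      thus False using j by simp
    qed
  qed
  hence "?S = {L + int k..}" by (simp add: set_eq_iff)
  hence "T h = L + int k" unfolding T_def by simp
  thus ?thesis using up by simp
qed

lemma T_le: "h \<in> carrier G \<Longrightarrow> leq h (g [^] T h)" using T_char by simp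

lemma T_gt: "h \<in> carrier G \<Longrightarrow> leq (g [^] (T h - 1)) h \<and> g [^] (T h - 1) \<noteq> h"
proof -
  assume h: "h \<in> carrier G"
  have n: "\<not> leq h (g [^] (T h - 1))" using T_char[OF h] by simp
  hence "leq (g [^] (T h - 1)) h" using total[OF h, of "g [^] (T h - 1)"] by auto
  moreover have "g [^] (T h - 1) \<noteq> h" using n refl h by auto
  ultimately show ?thesis by simp
qed

lemma T_mono: "x \<in> carrier G \<Longrightarrow> y \<in> carrier G \<Longrightarrow> leq x y \<Longrightarrow> T x \<le> T y"
proof -
  assume a: "x \<in> carrier G" "y \<in> carrier G" "leq x y"
  have "leq x (g [^] T y)" using trans[OF _ _ _ a(3) T_le[OF a(2)]] a by simp
  thus ?thesis using T_char[OF a(1)] by simp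
qed

lemma T_pow: "T (g [^] (p::int)) = p"
proof -
  have c: "g [^] p \<in> carrier G" by simp
  have "T (g [^] p) \<le> p" using T_char[OF c, of p] refl[OF c] by simp
  moreover have "p \<le> T (g [^] p)" using T_le[OF c] pow_le_iff by simp
  ultimately show ?thesis by simp
qed

lemma T_sub: assumes "x \<in> carrier G" "y \<in> carrier G" shows "T (x \<otimes> y) \<le> T x + T y"
proof -
  have "leq (x \<otimes> y) (g [^] T x \<otimes> g [^] T y)" using assms T_le mult_mono2 by simp
  hence "leq (x \<otimes> y) (g [^] (T x + T y))" by (simp add: int_pow_mult)
  thus ?thesis using T_char[OF m_closed[OF assms]] by simp
qed

lemma T_super: assumes "x \<in> carrier G" "y \<in> carrier G" shows "T x + T y - 1 \<le> T (x \<otimes> y)"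
proof (rule ccontr)
  assume c: "\<not> T x + T y - 1 \<le> T (x \<otimes> y)"
  have gx: "leq (g [^] (T x - 1)) x" "g [^] (T x - 1) \<noteq> x" using T_gt[OF assms(1)] by auto
  have gy: "leq (g [^] (T y - 1)) y" using T_gt[OF assms(2)] by auto
  have s: "leq (g [^] (T x - 1) \<otimes> g [^] (T y - 1)) (x \<otimes> y) \<and> g [^] (T x - 1) \<otimes> g [^] (T y - 1) \<noteq> x \<otimes> y"
    using mult_strict[of "g [^] (T x - 1)" "g [^] (T y - 1)" x y] gx gy assms by simp
  have e: "g [^] (T x - 1) \<otimes> g [^] (T y - 1) = g [^] (T x + T y - 2)" by (simp add: int_pow_mult[symmetric])
  have "leq (x \<otimes> y) (g [^] (T x + T y - 2))" using c T_char[OF m_closed[OF assms]] by simp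
  hence "leq (x \<otimes> y) (g [^] (T x - 1) \<otimes> g [^] (T y - 1))" using e by simp
  hence "x \<otimes> y = g [^] (T x - 1) \<otimes> g [^] (T y - 1)" using antisym s assms by simp
  thus False using s by simp
qed

end

lemma div_aux: fixes X B a b :: real
  assumes "a > 0" "b > 0" "\<bar>X - a * B\<bar> \<le> a" shows "\<bar>X / (a * b) - B / b\<bar> \<le> 1 / b"
proof -
  have "X / (a * b) - B / b = (X - a * B) / (a * b)" using assms by (simp add: field_simps)
  hence "\<bar>X / (a * b) - B / b\<bar> = \<bar>X - a * B\<bar> / (a * b)" using assms by (simp add: abs_divide)
  also have "\<dots> \<le> a / (a * b)" using assms by (intro divide_right_mono) auto
  also have "\<dots> = 1 / b" using assms by simp
  finally show ?thesis .
qed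

context bod begin

lemma T_one: "T \<one> = 0"
  using T_pow[of 0] by simp

lemma Tpow_add: assumes "h \<in> carrier G"
  shows "T (h [^] (m + n :: nat)) \<le> T (h [^] m) + T (h [^] n) \<and> T (h [^] m) + T (h [^] n) - 1 \<le> T (h [^] (m + n))"
  using T_sub[of "h [^] m" "h [^] n"] T_super[of "h [^] m" "h [^] n"] assms by (simp add: nat_pow_mult)

lemma Tpow_mult: assumes "h \<in> carrier G"
  shows "\<bar>T (h [^] (k * m :: nat)) - int k * T (h [^] m)\<bar> \<le> int k"
proof (induction k)
  case 0 thus ?case by (simp add: T_one)
next
  case (Suc k)
  have e: "Suc k * m = k * m + m" by simp
  show ?case using Tpow_add[OF assms, of "k * m" m] Suc unfolding e by (simp add: algebra_simps abs_le_iff)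
qed

lemma Tpow_real: assumes "h \<in> carrier G"
  shows "\<bar>real_of_int (T (h [^] (k * m :: nat))) - real k * real_of_int (T (h [^] m))\<bar> \<le> real k"
proof -
  have "real_of_int \<bar>T (h [^] (k * m :: nat)) - int k * T (h [^] m)\<bar> \<le> real_of_int (int k)"
    using Tpow_mult[OF assms] by (simp only: of_int_le_iff)
  thus ?thesis by simp
qed

definition f :: "'a \<Rightarrow> nat \<Rightarrow> real" where "f h n = real_of_int (T (h [^] n)) / real n"

lemma f_eq: "growth_seq G leq g h = f h"
  unfolding growth_seq_def f_def T_def by (rule ext) simp

lemma f_bound: assumes "h \<in> carrier G" "m \<ge> 1" "n \<ge> 1"
  shows "\<bar>f h m - f h n\<bar> \<le> 1 / real m + 1 / real n"
proof -
  have a: "\<bar>real_of_int (T (h [^] (n * m))) / (real n * real m) - f h m\<bar> \<le> 1 / real m"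
    unfolding f_def using div_aux[OF _ _ Tpow_real[OF assms(1), of n m], of "real m"] assms by simp
  have b: "\<bar>real_of_int (T (h [^] (m * n))) / (real m * real n) - f h n\<bar> \<le> 1 / real n"
    unfolding f_def using div_aux[OF _ _ Tpow_real[OF assms(1), of m n], of "real n"] assms by simp
  have "n * m = m * n" by simp
  thus ?thesis using a b by (simp add: mult.commute abs_le_iff)
qed

lemma f_conv: assumes "h \<in> carrier G" shows "convergent (f h)"
proof -
  have "Cauchy (f h)"
  proof (rule CauchyI)
    fix e :: real assume e: "0 < e"
    obtain M :: nat where M: "2 / e < real M" using reals_Archimedean2 by blast
    have M1: "M \<ge> 1" using M e by (cases M) (auto simp: field_simps)
    have "2 / real M < e" using M e M1 by (simp add: field_simps)
    show "\<exists>M. \<forall>m\<ge>M. \<forall>n\<ge>M. norm (f h m - f h n) < e"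
    proof (intro exI allI impI)
      fix m n assume mn: "M \<le> m" "M \<le> n"
      have "\<bar>f h m - f h n\<bar> \<le> 1 / real m + 1 / real n" using f_bound[OF assms] mn M1 by simp
      also have "\<dots> \<le> 1 / real M + 1 / real M" using mn M1
        by (intro add_mono divide_left_mono) auto
      also have "\<dots> < e" using \<open>2 / real M < e\<close> by simp
      finally show "norm (f h m - f h n) < e" by simp
    qed
  qed
  thus ?thesis by (simp add: Cauchy_convergent_iff)
qed

lemma f_lim_bound: assumes "h \<in> carrier G" "m \<ge> 1"
  shows "\<bar>f h m - lim (f h)\<bar> \<le> 1 / real m"
proof -
  have L: "f h \<longlonglongrightarrow> lim (f h)" using f_conv[OF assms(1)] by (simp add: convergent_LIMSEQ_iff)
  have "(\<lambda>n. \<bar>f h m - f h n\<bar> - 1 / real n) \<longlonglongrightarrow> \<bar>f h m - lim (f h)\<bar> - 0"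
    by (intro tendsto_intros L lim_const_over_n)
  moreover have "\<forall>n\<ge>1. \<bar>f h m - f h n\<bar> - 1 / real n \<le> 1 / real m"
    using f_bound[OF assms] by fastforce
  ultimately show ?thesis using LIMSEQ_le_const2 by fastforce
qed

end

context bod begin

lemma T_prod_pow: assumes x: "x \<in> carrier G" and y: "y \<in> carrier G"
  shows "\<bar>T ((x \<otimes> y) [^] (n::nat)) - T (x [^] n) - T (y [^] n)\<bar> \<le> 1"
proof -
  have c: "x [^] n \<in> carrier G" "y [^] n \<in> carrier G" "(x \<otimes> y) [^] n \<in> carrier G" using x y by auto
  have b1: "T (x [^] n \<otimes> y [^] n) \<le> T (x [^] n) + T (y [^] n)" "T (x [^] n) + T (y [^] n) - 1 \<le> T (x [^] n \<otimes> y [^] n)"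
    using T_sub[OF c(1,2)] T_super[OF c(1,2)] by auto
  have b2: "T (y [^] n \<otimes> x [^] n) \<le> T (x [^] n) + T (y [^] n)" "T (x [^] n) + T (y [^] n) - 1 \<le> T (y [^] n \<otimes> x [^] n)"
    using T_sub[OF c(2,1)] T_super[OF c(2,1)] by auto
  have "leq (x \<otimes> y) (y \<otimes> x) \<or> leq (y \<otimes> x) (x \<otimes> y)" using total x y by auto
  thus ?thesis
  proof
    assume o: "leq (x \<otimes> y) (y \<otimes> x)"
    have "T (x [^] n \<otimes> y [^] n) \<le> T ((x \<otimes> y) [^] n)"
      using T_mono[OF _ c(3) swap_lower[OF x y o]] c by simp
    moreover have "T ((x \<otimes> y) [^] n) \<le> T (y [^] n \<otimes> x [^] n)"
      using T_mono[OF c(3) _ swap_upper[OF x y o]] c by simp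
    ultimately show ?thesis using b1 b2 by (simp add: abs_le_iff)
  next
    assume o: "leq (y \<otimes> x) (x \<otimes> y)"
    have l: "leq ((x \<otimes> y) [^] n) (x [^] n \<otimes> y [^] n)"
      using bo.swap_lower[OF bo_flip, of x y n] x y o by simp
    have u: "leq (y [^] n \<otimes> x [^] n) ((x \<otimes> y) [^] n)"
      using bo.swap_upper[OF bo_flip, of x y n] x y o by simp
    have "T ((x \<otimes> y) [^] n) \<le> T (x [^] n \<otimes> y [^] n)"
      using T_mono[OF c(3) _ l] c by simp
    moreover have "T (y [^] n \<otimes> x [^] n) \<le> T ((x \<otimes> y) [^] n)"
      using T_mono[OF _ c(3) u] c by simp
    ultimately show ?thesis using b1 b2 by (simp add: abs_le_iff)
  qed
qed

lemma f_add_bound: assumes x: "x \<in> carrier G" and y: "y \<in> carrier G" and m: "m \<ge> 1"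
  shows "\<bar>f (x \<otimes> y) m - f x m - f y m\<bar> \<le> 1 / real m"
proof -
  have "f (x \<otimes> y) m - f x m - f y m = real_of_int (T ((x \<otimes> y) [^] m) - T (x [^] m) - T (y [^] m)) / real m"
    unfolding f_def by (simp add: diff_divide_distrib)
  moreover have "\<bar>real_of_int (T ((x \<otimes> y) [^] m) - T (x [^] m) - T (y [^] m))\<bar> \<le> 1"
  proof -
    have "real_of_int \<bar>T ((x \<otimes> y) [^] m) - T (x [^] m) - T (y [^] m)\<bar> \<le> real_of_int 1"
      using T_prod_pow[OF x y, of m] by (rule of_int_le_iff[THEN iffD2])
    thus ?thesis by simp
  qed
  ultimately show ?thesis using m by (simp add: abs_divide divide_right_mono)
qed

lemma growth_hom: assumes x: "x \<in> carrier G" and y: "y \<in> carrier G"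
  shows "lim (f (x \<otimes> y)) = lim (f x) + lim (f y)"
proof (rule ccontr)
  let ?c = "\<bar>lim (f (x \<otimes> y)) - lim (f x) - lim (f y)\<bar>"
  assume "lim (f (x \<otimes> y)) \<noteq> lim (f x) + lim (f y)"
  hence cpos: "?c > 0" by simp
  obtain m :: nat where M: "4 / ?c < real m" using reals_Archimedean2 by blast
  have m1: "m \<ge> 1" using M cpos by (cases m) (auto simp: field_simps)
  have xy: "x \<otimes> y \<in> carrier G" using x y by simp
  have "?c \<le> \<bar>f (x \<otimes> y) m - lim (f (x \<otimes> y))\<bar> + \<bar>f x m - lim (f x)\<bar> + \<bar>f y m - lim (f y)\<bar>
      + \<bar>f (x \<otimes> y) m - f x m - f y m\<bar>" by arith
  also have "\<dots> \<le> 1 / real m + 1 / real m + 1 / real m + 1 / real m"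
    using f_lim_bound[OF xy m1] f_lim_bound[OF x m1] f_lim_bound[OF y m1] f_add_bound[OF x y m1]
    by linarith
  finally have "?c \<le> 4 / real m" by simp
  hence "?c * real m \<le> 4" using m1 by (simp add: field_simps)
  moreover have "4 < ?c * real m" using M cpos by (simp add: field_simps)
  ultimately show False by simp
qed

end

context bod begin

definition Hf :: "int \<Rightarrow> 'a set" where "Hf n = {x \<in> carrier G. leq (g [^] n) x}"
definition act :: "'a \<Rightarrow> 'a \<Rightarrow> 'a" where "act k = (\<lambda>x\<in>carrier G. k \<otimes> x)"

lemma inv_le_iff: "a \<in> carrier G \<Longrightarrow> b \<in> carrier G \<Longrightarrow> leq (inv a) (inv b) \<longleftrightarrow> leq b a"
  using inv_mono[of "inv a" "inv b"] inv_mono[of b a] by auto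

lemma Hf_mem: "a \<in> Hf n \<longleftrightarrow> a \<in> carrier G \<and> n \<le> - T (inv a)"
proof (cases "a \<in> carrier G")
  case True
  have "leq (g [^] n) a \<longleftrightarrow> leq (inv a) (inv (g [^] n))" using inv_le_iff[OF True, of "g [^] n"] by simp
  also have "\<dots> \<longleftrightarrow> leq (inv a) (g [^] (- n))" by (simp add: int_pow_neg)
  also have "\<dots> \<longleftrightarrow> T (inv a) \<le> - n" using T_char[of "inv a"] True by simp
  finally show ?thesis unfolding Hf_def using True by auto
qed (simp add: Hf_def)

lemma height_eq: assumes "a \<in> carrier G" shows "height Hf a = - T (inv a)"
proof -
  have "{n. a \<in> Hf n} = {..- T (inv a)}" using assms Hf_mem by auto
  thus ?thesis unfolding height_def by simp
qed

lemma T_inv_gpow: "T (inv (g [^] (n::int))) = - n"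
  using T_pow[of "- n"] by (simp add: int_pow_neg)

lemma filtration: "half_space_filtration (carrier G) Hf"
  unfolding half_space_filtration_def
proof (intro conjI allI)
  fix n :: int
  have "g [^] n \<in> Hf n" "g [^] n \<notin> Hf (n + 1)" using Hf_mem T_inv_gpow by auto
  moreover have "Hf (n + 1) \<subseteq> Hf n" using Hf_mem by auto
  ultimately show "Hf (n + 1) \<subset> Hf n" by blast
next
  show "(\<Inter>n. Hf n) = {}"
  proof (rule ccontr)
    assume "(\<Inter>n. Hf n) \<noteq> {}"
    then obtain a where "\<forall>n. a \<in> Hf n" by blast
    hence "- T (inv a) + 1 \<le> - T (inv a)" using Hf_mem by blast
    thus False by simp
  qed
next
  show "(\<Union>n. Hf n) = carrier G"
  proof
    show "(\<Union>n. Hf n) \<subseteq> carrier G" using Hf_mem by auto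
    show "carrier G \<subseteq> (\<Union>n. Hf n)"
    proof
      fix a assume "a \<in> carrier G"
      hence "a \<in> Hf (- T (inv a))" using Hf_mem by simp
      thus "a \<in> (\<Union>n. Hf n)" by blast
    qed
  qed
qed

lemma hso: "half_space_order (carrier G) leq Hf"
  unfolding half_space_order_def
proof (intro conjI filtration exI[of _ 1] ballI impI)
  show "partial_order_rel (carrier G) leq" using bi unfolding bi_invariant_order_def by simp
next
  fix a b assume a: "a \<in> carrier G" and b: "b \<in> carrier G" and w: "1 \<le> height2 Hf a b"
  show "leq b a"
  proof (rule ccontr)
    assume "\<not> leq b a"
    hence "leq a b" using total a b by blast
    hence "leq (inv b) (inv a)" using inv_mono a b by simp
    hence "T (inv b) \<le> T (inv a)" using T_mono a b by simp
    thus False using w a b by (simp add: height2_def height_eq)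
  qed
qed

lemma act_bij: "k \<in> carrier G \<Longrightarrow> act k \<in> Bij (carrier G)"
  unfolding Bij_def act_def bij_betw_def
proof (intro IntI CollectI conjI)
  assume k: "k \<in> carrier G"
  show "(\<lambda>x\<in>carrier G. k \<otimes> x) \<in> extensional (carrier G)" by simp
  show "inj_on (\<lambda>x\<in>carrier G. k \<otimes> x) (carrier G)" using k by (intro inj_onI) simp
  show "(\<lambda>x\<in>carrier G. k \<otimes> x) ` carrier G = carrier G"
  proof
    show "(\<lambda>x\<in>carrier G. k \<otimes> x) ` carrier G \<subseteq> carrier G" using k by auto
    show "carrier G \<subseteq> (\<lambda>x\<in>carrier G. k \<otimes> x) ` carrier G"
    proof
      fix x assume x: "x \<in> carrier G"
      have "x = (\<lambda>x\<in>carrier G. k \<otimes> x) (inv k \<otimes> x)" using k x by (simp add: m_assoc[symmetric])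
      thus "x \<in> (\<lambda>x\<in>carrier G. k \<otimes> x) ` carrier G" using k x by blast
    qed
  qed
qed

lemma act_hom: "act \<in> hom G (BijGroup (carrier G))"
  unfolding hom_def
proof (intro CollectI conjI ballI)
  show "act \<in> carrier G \<rightarrow> carrier (BijGroup (carrier G))" using act_bij by (simp add: BijGroup_def)
next
  fix k1 k2 assume k: "k1 \<in> carrier G" "k2 \<in> carrier G"
  have "act (k1 \<otimes> k2) = compose (carrier G) (act k1) (act k2)"
    using k by (intro ext) (simp add: act_def compose_def m_assoc)
  thus "act (k1 \<otimes> k2) = act k1 \<otimes>\<^bsub>BijGroup (carrier G)\<^esub> act k2"
    using k act_bij by (simp add: BijGroup_def)
qed

lemma act_ga: "group_action G (carrier G) act"
  unfolding group_action_def group_hom_def using act_hom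
  by (simp add: group_BijGroup group_hom_axioms.intro is_group)

lemma qaa: "quasi_aut_action G (carrier G) Hf act"
  unfolding quasi_aut_action_def
proof (intro conjI act_ga exI[of _ 1] ballI)
  fix k a b assume k: "k \<in> carrier G" and a: "a \<in> carrier G" and b: "b \<in> carrier G"
  have e: "act k a = k \<otimes> a" "act k b = k \<otimes> b" using a b by (auto simp: act_def)
  have ia: "inv (k \<otimes> a) = inv a \<otimes> inv k" "inv (k \<otimes> b) = inv b \<otimes> inv k" using k a b by (auto simp: inv_mult_group)
  have "T (inv a \<otimes> inv k) \<le> T (inv a) + T (inv k)" "T (inv a) + T (inv k) - 1 \<le> T (inv a \<otimes> inv k)"
    "T (inv b \<otimes> inv k) \<le> T (inv b) + T (inv k)" "T (inv b) + T (inv k) - 1 \<le> T (inv b \<otimes> inv k)"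
    using T_sub T_super k a b by auto
  thus "\<bar>height2 Hf (act k a) (act k b) - height2 Hf a b\<bar> \<le> 1"
    using e ia k a b by (simp add: height2_def height_eq abs_le_iff)
qed

lemma eff: "effective_action G (carrier G) act"
  unfolding effective_action_def
proof (intro ballI impI)
  fix k assume k: "k \<in> carrier G" and "\<forall>x\<in>carrier G. act k x = x"
  hence "act k \<one> = \<one>" by simp
  thus "k = \<one>" using k by (simp add: act_def)
qed

lemma unb: "unbounded_action G (carrier G) Hf act"
proof -
  have e: "(\<lambda>n::int. height Hf (act (g [^] n) \<one>)) = (\<lambda>n. n)"
    by (rule ext) (simp add: act_def height_eq T_inv_gpow)
  have t1: "filterlim (\<lambda>n::int. height Hf (act (g [^] n) \<one>)) at_top at_top"
    unfolding e by (rule filterlim_ident)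
  have t2: "filterlim (\<lambda>n::int. height Hf (act (g [^] n) \<one>)) at_bot at_bot"
    unfolding e by (rule filterlim_ident)
  show ?thesis unfolding unbounded_action_def using t1 t2 g_carr one_closed by blast
qed

lemma ind: assumes a: "a \<in> carrier G" and b: "b \<in> carrier G"
  shows "leq a b \<longleftrightarrow> induced_order G (carrier G) leq act a b"
  unfolding induced_order_def
proof
  assume l: "leq a b"
  show "\<forall>k\<in>carrier G. \<forall>x\<in>carrier G. leq (act (k \<otimes> a) x) (act (k \<otimes> b) x)"
  proof (intro ballI)
    fix k x assume k: "k \<in> carrier G" and x: "x \<in> carrier G"
    have "leq (k \<otimes> a) (k \<otimes> b)" using ml[OF a b k l] .
    hence "leq (k \<otimes> a \<otimes> x) (k \<otimes> b \<otimes> x)" using mr k a b x by simp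
    thus "leq (act (k \<otimes> a) x) (act (k \<otimes> b) x)" using x by (simp add: act_def)
  qed
next
  assume "\<forall>k\<in>carrier G. \<forall>x\<in>carrier G. leq (act (k \<otimes> a) x) (act (k \<otimes> b) x)"
  hence "leq (act (\<one> \<otimes> a) \<one>) (act (\<one> \<otimes> b) \<one>)" by simp
  thus "leq a b" using a b by (simp add: act_def)
qed

lemma qto: "quasi_total_order G leq"
  unfolding quasi_total_order_def
  using hso qaa eff unb ind by blast

end

theorem proposition1p4:
  fixes G (structure) and leq :: "'a \<Rightarrow> 'a \<Rightarrow> bool"
  assumes "group G"
    and "bi_invariant_order G leq"
    and "total_rel (carrier G) leq"
    and "admissible G leq"
  shows "quasi_total_order G leq \<and>
    (\<forall>g\<in>dominants G leq.
       (\<forall>h\<in>carrier G. convergent (growth_seq G leq g h)) \<and>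
       (\<forall>x\<in>carrier G. \<forall>y\<in>carrier G.
          growth G leq g (x \<otimes> y) = growth G leq g x + growth G leq g y))"
proof -
  have bo: "bo G leq" using assms unfolding bo_def bo_axioms_def by simp
  obtain g0 where g0: "g0 \<in> dominants G leq" using assms(4) unfolding admissible_def by auto
  have "bod G leq g0" using bo g0 unfolding bod_def bod_axioms_def by simp
  hence q: "quasi_total_order G leq" by (rule bod.qto)
  have r: "\<forall>g\<in>dominants G leq.
       (\<forall>h\<in>carrier G. convergent (growth_seq G leq g h)) \<and>
       (\<forall>x\<in>carrier G. \<forall>y\<in>carrier G.
          growth G leq g (x \<otimes> y) = growth G leq g x + growth G leq g y)"
  proof (intro ballI conjI)
    fix g assume g: "g \<in> dominants G leq"
    have b: "bod G leq g" using bo g unfolding bod_def bod_axioms_def by simp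
    fix h assume "h \<in> carrier G"
    thus "convergent (growth_seq G leq g h)" using bod.f_eq[OF b] bod.f_conv[OF b] by simp
  next
    fix g x y assume g: "g \<in> dominants G leq" and x: "x \<in> carrier G" and y: "y \<in> carrier G"
    have b: "bod G leq g" using bo g unfolding bod_def bod_axioms_def by simp
    show "growth G leq g (x \<otimes> y) = growth G leq g x + growth G leq g y"
      unfolding growth_def bod.f_eq[OF b] using bod.growth_hom[OF b x y] .
  qed
  show ?thesis using q r by blast
qed

end
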